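(* Let $S$ be a finite set of discrete probability distributions. For $x\in(0,1]$ let $C_S(x)$ be the smallest $y\in[0,1]$ with $\textsc{Rem-Mass}^{\textsc{advanced}}_S(y)\ge x$. Then $$\int_0^1\log_2\frac{1}{C_S(x)}\,dx\le\int_0^1\frac{\textsc{Inv-Prof}_S(y)}{y\ln 2}\,dy+\frac{1+\log_2 e}{2}.$$
   Context: Distributions are finite vectors $p(1)\ge\dots\ge p(n)\ge0$ summing to $1$. For $y\in[0,1]$, $$\textsc{Rem-Mass}^{\textsc{advanced}}_S(y)=\max_{p\in S}\sum_{j=1}^n\begin{cases}y & y\le p(j)/2,\\ p(j)/2 & p(j)/2<y<p(j),\\ p(j) & p(j)\le y.\end{cases}$$ For a distribution $p$, $\textsc{Inv-Sketch}_p(y)=\sum_j p(j)[p(j)\le y]$, and $\textsc{Inv-Prof}_S(y)=\max_{p\in S}\textsc{Inv-Sketch}_p(y)$. *)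

theory Defs
  imports "HOL-Analysis.Analysis"
begin

definition is_distribution :: "real list \<Rightarrow> bool" where
  "is_distribution p \<longleftrightarrow> sorted_wrt (\<ge>) p \<and> (\<forall>a\<in>set p. 0 \<le> a) \<and> sum_list p = 1"

definition rem_term :: "real \<Rightarrow> real \<Rightarrow> real" where
  "rem_term y q = (if y \<le> q / 2 then y else if y < q then q / 2 else q)"

definition rem_mass_adv :: "real list set \<Rightarrow> real \<Rightarrow> real" where
  "rem_mass_adv S y = Max ((\<lambda>p. sum_list (map (rem_term y) p)) ` S)"

definition inv_sketch :: "real list \<Rightarrow> real \<Rightarrow> real" where
  "inv_sketch p y = sum_list (map (\<lambda>q. if q \<le> y then q else 0) p)"

definition inv_prof :: "real list set \<Rightarrow> real \<Rightarrow> real" where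
  "inv_prof S y = Max ((\<lambda>p. inv_sketch p y) ` S)"

definition C_S :: "real list set \<Rightarrow> real \<Rightarrow> real" where
  "C_S S x = (LEAST y. y \<in> {0..1} \<and> rem_mass_adv S y \<ge> x)"

end

theory Submission
  imports Defs
begin

lemma rt_nonneg: "0 \<le> q \<Longrightarrow> 0 \<le> y \<Longrightarrow> 0 \<le> rem_term y q"
  by (simp add: rem_term_def)
lemma rt_le: "0 \<le> q \<Longrightarrow> rem_term y q \<le> q"
  by (simp add: rem_term_def)
lemma rt_mono: "0 \<le> q \<Longrightarrow> y \<le> y' \<Longrightarrow> rem_term y q \<le> rem_term y' q"
  by (simp add: rem_term_def)
lemma rt_zero: "0 \<le> q \<Longrightarrow> rem_term 0 q = 0"
  by (simp add: rem_term_def)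
lemma rt_one: "0 \<le> q \<Longrightarrow> q \<le> 1 \<Longrightarrow> rem_term 1 q = q"
  by (simp add: rem_term_def)
lemma rt_decomp: "0 \<le> q \<Longrightarrow> 0 < t \<Longrightarrow>
   rem_term t q = (if q \<le> t then q else 0) / 2 + t * (q / max (2*t) q)"
  by (auto simp: rem_term_def max_def field_simps)

lemma rt_tendsto:
  assumes "0 \<le> q"
  shows "((\<lambda>y. rem_term y q) \<longlongrightarrow> rem_term y0 q) (at_right y0)"
proof -
  consider "y0 < q/2" | "q/2 \<le> y0" "y0 < q" | "q \<le> y0" by linarith
  then show ?thesis
  proof cases
    case 1
    have ev: "eventually (\<lambda>y. y = rem_term y q) (at_right y0)"
      unfolding eventually_at_right_field using 1
      by (intro exI[of _ "q/2"]) (auto simp: rem_term_def)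
    have "((\<lambda>y. y) \<longlongrightarrow> y0) (at_right y0)"
      by (simp add: tendsto_ident_at)
    then have "((\<lambda>y. y) \<longlongrightarrow> rem_term y0 q) (at_right y0)"
      using 1 by (simp add: rem_term_def)
    then show ?thesis using ev by (rule Lim_transform_eventually)
  next
    case 2
    have ev: "eventually (\<lambda>y. rem_term y0 q = rem_term y q) (at_right y0)"
      unfolding eventually_at_right_field using 2
      by (intro exI[of _ "q"]) (auto simp: rem_term_def)
    show ?thesis using tendsto_const ev by (rule Lim_transform_eventually)
  next
    case 3
    have ev: "eventually (\<lambda>y. rem_term y0 q = rem_term y q) (at_right y0)"
      unfolding eventually_at_right_field using 3 assms
      by (intro exI[of _ "y0+1"]) (auto simp: rem_term_def)
    show ?thesis using tendsto_const ev by (rule Lim_transform_eventually)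
  qed
qed

definition FF :: "real list \<Rightarrow> real \<Rightarrow> real" where
  "FF p y = sum_list (map (rem_term y) p)"

lemma FF_nonneg: "\<forall>q\<in>set p. 0 \<le> q \<Longrightarrow> 0 \<le> y \<Longrightarrow> 0 \<le> FF p y"
  unfolding FF_def by (induction p) (auto intro!: add_nonneg_nonneg rt_nonneg)
lemma FF_le: "\<forall>q\<in>set p. 0 \<le> q \<Longrightarrow> FF p y \<le> sum_list p"
  unfolding FF_def by (induction p) (auto intro!: add_mono rt_le)
lemma FF_mono: "\<forall>q\<in>set p. 0 \<le> q \<Longrightarrow> y \<le> y' \<Longrightarrow> FF p y \<le> FF p y'"
  unfolding FF_def by (induction p) (auto intro!: add_mono rt_mono)
lemma FF_zero: "\<forall>q\<in>set p. 0 \<le> q \<Longrightarrow> FF p 0 = 0"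
  unfolding FF_def by (induction p) (auto simp: rt_zero)
lemma FF_one: "\<forall>q\<in>set p. 0 \<le> q \<and> q \<le> 1 \<Longrightarrow> FF p 1 = sum_list p"
  unfolding FF_def by (induction p) (auto simp: rt_one)
lemma FF_tendsto: "\<forall>q\<in>set p. 0 \<le> q \<Longrightarrow> (FF p \<longlongrightarrow> FF p y0) (at_right y0)"
  unfolding FF_def by (induction p) (auto intro!: tendsto_add rt_tendsto)

lemma dist_atoms: "is_distribution p \<Longrightarrow> q \<in> set p \<Longrightarrow> 0 \<le> q \<and> q \<le> 1"
  unfolding is_distribution_def
  by (metis member_le_sum_list)

lemma inv_sketch_mono: "\<forall>q\<in>set p. 0 \<le> q \<Longrightarrow> y \<le> y' \<Longrightarrow> inv_sketch p y \<le> inv_sketch p y'"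
  unfolding inv_sketch_def by (induction p) (auto intro!: add_mono)
lemma inv_sketch_nonneg: "\<forall>q\<in>set p. 0 \<le> q \<Longrightarrow> 0 \<le> inv_sketch p y"
  unfolding inv_sketch_def by (induction p) (auto intro!: add_nonneg_nonneg)


lemma int_inv:
  assumes "0 < a" "a \<le> 1"
  shows "(\<integral>\<^sup>+ t. ennreal (indicator {a..1} t * (1/t)) \<partial>lborel) = ennreal (- ln a)"
proof -
  have "((\<lambda>t. 1/t) has_integral (ln 1 - ln a)) {a..1}"
  proof (rule fundamental_theorem_of_calculus)
    fix x assume "x \<in> {a..1}"
    then have "x > 0" using assms by auto
    then show "(ln has_vector_derivative 1/x) (at x within {a..1})"
      by (auto intro!: derivative_eq_intros simp: has_real_derivative_iff_has_vector_derivative[symmetric])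
  qed (use assms in auto)
  then show ?thesis
    by (subst nn_integral_has_integral_lebesgue[where I="ln 1 - ln a"]) (use assms in auto)
qed

lemma int_inv2:
  assumes "0 < a" "a \<le> 1"
  shows "(\<integral>\<^sup>+ t. ennreal (indicator {a..1} t * (1/t^2)) \<partial>lborel) = ennreal (1/a - 1)"
proof -
  have "((\<lambda>t. 1/t^2) has_integral ((- 1/1) - (- 1/a))) {a..1}"
  proof (rule fundamental_theorem_of_calculus)
    fix x assume "x \<in> {a..1}"
    then have "x > 0" using assms by auto
    then show "((\<lambda>t. - 1/t) has_vector_derivative 1/x^2) (at x within {a..1})"
      by (auto intro!: derivative_eq_intros simp: has_real_derivative_iff_has_vector_derivative[symmetric]
          power2_eq_square)
  qed (use assms in auto)
  then show ?thesis
    by (subst nn_integral_has_integral_lebesgue[where I="(- 1/1) - (- 1/a)"]) (use assms in auto)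
qed

lemma int_half:
  "(\<integral>\<^sup>+ t. ennreal (indicator {1/2..1} t * (1/(2*t))) \<partial>lborel) = ennreal (ln 2 / 2)"
proof -
  have "((\<lambda>t::real. 1/(2*t)) has_integral (ln 1 / 2 - ln (1/2::real) / 2)) {1/2..1}"
  proof (rule fundamental_theorem_of_calculus)
    fix x :: real assume "x \<in> {1/2..1}"
    then have "x > 0" by auto
    then show "((\<lambda>t. ln t / 2) has_vector_derivative 1/(2*x)) (at x within {1/2..1})"
      by (auto intro!: derivative_eq_intros simp: has_real_derivative_iff_has_vector_derivative[symmetric])
  qed auto
  moreover have "ln 1 / 2 - ln (1/2::real) / 2 = ln 2 / 2" by (simp add: ln_div)
  ultimately have "((\<lambda>t::real. 1/(2*t)) has_integral (ln 2 / 2)) {1/2..1}" by (metis (no_types))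
  then show ?thesis
    by (subst nn_integral_has_integral_lebesgue[where I="ln 2 / 2"]) auto
qed


lemma inv_sketch_meas[measurable]: "inv_sketch p \<in> borel_measurable borel"
proof (induction p)
  case Nil then show ?case by (simp add: inv_sketch_def)
next
  case (Cons q p)
  have "inv_sketch (q # p) = (\<lambda>y. (if q \<le> y then q else 0) + inv_sketch p y)"
    by (auto simp: inv_sketch_def)
  then show ?case using Cons by simp
qed

lemma atom_int:
  assumes t: "0 < t" "t \<le> 1/2" and q: "0 \<le> q" "q \<le> 1"
  shows "ennreal (q / max (2*t) q) = ennreal q +
     (\<integral>\<^sup>+ s. ennreal (indicator {2*t..1} s * ((if q \<le> s then q else 0) / s^2)) \<partial>lborel)"
proof (cases "q = 0")
  case True then show ?thesis unfolding True by simp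
next
  case False
  define m where "m = max (2*t) q"
  have m: "0 < m" "m \<le> 1" using t q by (auto simp: m_def)
  have eq: "ennreal (indicator {2*t..1} s * ((if q \<le> s then q else 0) / s^2))
      = ennreal q * ennreal (indicator {m..1} s * (1/s^2))" for s
  proof -
    have "indicator {2*t..1} s * ((if q \<le> s then q else 0) / s^2) = q * (indicator {m..1} s * (1/s^2))"
      by (auto simp: m_def indicator_def)
    then show ?thesis using ennreal_mult'[OF q(1)] by metis
  qed
  have I: "(\<integral>\<^sup>+ s. ennreal (indicator {2*t..1} s * ((if q \<le> s then q else 0) / s^2)) \<partial>lborel)
      = ennreal q * ennreal (1/m - 1)"
  proof -
    have "(\<integral>\<^sup>+ s. ennreal q * ennreal (indicator {m..1} s * (1/s^2)) \<partial>lborel)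
       = ennreal q * (\<integral>\<^sup>+ s. ennreal (indicator {m..1} s * (1/s^2)) \<partial>lborel)"
      by (rule nn_integral_cmult) (auto intro!: measurable_compose[OF _ measurable_ennreal])
    then show ?thesis unfolding eq int_inv2[OF m] .
  qed
  have m1: "0 \<le> 1/m - 1" using m by simp
  have "ennreal q + ennreal q * ennreal (1/m - 1) = ennreal (q + q * (1/m - 1))"
    using m1 q by (simp add: ennreal_mult ennreal_plus)
  also have "q + q * (1/m - 1) = q / m" using m by (simp add: field_simps)
  finally show ?thesis unfolding I m_def by simp
qed

lemma list_int:
  assumes t: "0 < t" "t \<le> 1/2" and q: "\<forall>q\<in>set p. 0 \<le> q \<and> q \<le> 1"
  shows "ennreal (sum_list (map (\<lambda>q. q / max (2*t) q) p)) = ennreal (sum_list p) +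
     (\<integral>\<^sup>+ s. ennreal (indicator {2*t..1} s * (inv_sketch p s / s^2)) \<partial>lborel)"
  using q
proof (induction p)
  case Nil then show ?case by (simp add: inv_sketch_def)
next
  case (Cons q p)
  have q: "0 \<le> q" "q \<le> 1" and p: "\<forall>q\<in>set p. 0 \<le> q \<and> q \<le> 1" using Cons.prems by auto
  have nn1: "0 \<le> q / max (2*t) q" using q t by auto
  have nn2: "0 \<le> sum_list (map (\<lambda>q. q / max (2*t) q) p)"
    using p t by (intro sum_list_nonneg) auto
  have nn3: "0 \<le> sum_list p" using p by (intro sum_list_nonneg) auto
  have split: "ennreal (indicator {2*t..1} s * (inv_sketch (q#p) s / s^2)) =
     ennreal (indicator {2*t..1} s * ((if q \<le> s then q else 0) / s^2)) +
     ennreal (indicator {2*t..1} s * (inv_sketch p s / s^2))" for s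
  proof -
    have "inv_sketch (q#p) s = (if q \<le> s then q else 0) + inv_sketch p s"
      by (simp add: inv_sketch_def)
    moreover have "0 \<le> inv_sketch p s" using p inv_sketch_nonneg by auto
    moreover have "indicator {2*t..1} s * ((a + b)/s^2) = indicator {2*t..1} s * (a/s^2) + indicator {2*t..1} s * (b/s^2)"
      for a b :: real by (simp add: add_divide_distrib distrib_left)
    moreover have "0 \<le> indicator {2*t..1} s * ((if q \<le> s then q else 0)/s^2)" using q by auto
    moreover have "0 \<le> indicator {2*t..1} s * (inv_sketch p s/s^2)" using calculation(2) by auto
    ultimately show ?thesis by (simp add: ennreal_plus)
  qed
  have "ennreal (sum_list (map (\<lambda>q. q / max (2*t) q) (q#p))) =
      ennreal (q / max (2*t) q) + ennreal (sum_list (map (\<lambda>q. q / max (2*t) q) p))"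
    using nn1 nn2 by (simp add: ennreal_plus)
  also have "\<dots> = (ennreal q + (\<integral>\<^sup>+ s. ennreal (indicator {2*t..1} s * ((if q \<le> s then q else 0) / s^2)) \<partial>lborel))
     + (ennreal (sum_list p) + (\<integral>\<^sup>+ s. ennreal (indicator {2*t..1} s * (inv_sketch p s / s^2)) \<partial>lborel))"
    using atom_int[OF t q] Cons.IH[OF p] by simp
  also have "\<dots> = ennreal (sum_list (q#p)) + (\<integral>\<^sup>+ s. ennreal (indicator {2*t..1} s * (inv_sketch (q#p) s / s^2)) \<partial>lborel)"
  proof -
    have m1: "(\<lambda>s. ennreal (indicator {2*t..1} s * ((if q \<le> s then q else 0) / s^2))) \<in> borel_measurable lborel"
      by (intro measurable_compose[OF _ measurable_ennreal]) simp
    have m2: "(\<lambda>s. ennreal (indicator {2*t..1} s * (inv_sketch p s / s^2))) \<in> borel_measurable lborel"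
      by (intro measurable_compose[OF _ measurable_ennreal]) simp
    have add: "(\<integral>\<^sup>+ s. ennreal (indicator {2*t..1} s * (inv_sketch (q#p) s / s^2)) \<partial>lborel)
      = (\<integral>\<^sup>+ s. ennreal (indicator {2*t..1} s * ((if q \<le> s then q else 0) / s^2)) \<partial>lborel)
      + (\<integral>\<^sup>+ s. ennreal (indicator {2*t..1} s * (inv_sketch p s / s^2)) \<partial>lborel)"
      unfolding split by (rule nn_integral_add[OF m1 m2])
    have e: "ennreal (sum_list (q#p)) = ennreal q + ennreal (sum_list p)"
      using q nn3 by (simp add: ennreal_plus)
    show ?thesis by (simp only: add e add_ac)
  qed
  finally show ?case .
qed

lemma FF_decomp:
  assumes t: "0 < t" and p: "\<forall>q\<in>set p. 0 \<le> q"
  shows "FF p t = inv_sketch p t / 2 + t * sum_list (map (\<lambda>q. q / max (2*t) q) p)"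
  using p
proof (induction p)
  case Nil then show ?case by (simp add: FF_def inv_sketch_def)
next
  case (Cons q p)
  have "FF (q#p) t = rem_term t q + FF p t" by (simp add: FF_def)
  moreover have "inv_sketch (q#p) t = (if q \<le> t then q else 0) + inv_sketch p t"
    by (simp add: inv_sketch_def)
  moreover have "sum_list (map (\<lambda>q. q / max (2*t) q) (q#p)) = q / max (2*t) q + sum_list (map (\<lambda>q. q / max (2*t) q) p)"
    by simp
  moreover have "rem_term t q = (if q \<le> t then q else 0) / 2 + t * (q / max (2*t) q)"
    using Cons.prems t by (intro rt_decomp) auto
  moreover have "FF p t = inv_sketch p t / 2 + t * sum_list (map (\<lambda>q. q / max (2*t) q) p)"
    using Cons by auto
  ultimately show ?case by (simp add: add_divide_distrib distrib_left)
qed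

context
  fixes S :: "real list set"
  assumes fin: "finite S" and ne: "S \<noteq> {}" and dist: "\<forall>p\<in>S. is_distribution p"
begin

lemma atoms: "p \<in> S \<Longrightarrow> q \<in> set p \<Longrightarrow> 0 \<le> q \<and> q \<le> 1"
  using dist dist_atoms by blast
lemma atoms0: "p \<in> S \<Longrightarrow> \<forall>q\<in>set p. 0 \<le> q"
  using atoms by blast
lemma sum1: "p \<in> S \<Longrightarrow> sum_list p = 1"
  using dist unfolding is_distribution_def by blast

lemma f_eq: "rem_mass_adv S y = Max ((\<lambda>p. FF p y) ` S)"
  unfolding rem_mass_adv_def FF_def by simp
lemma f_ge: "p \<in> S \<Longrightarrow> FF p y \<le> rem_mass_adv S y"
  unfolding f_eq using fin by (intro Max_ge) auto
lemma f_att: "\<exists>p\<in>S. rem_mass_adv S y = FF p y"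
proof -
  have "Max ((\<lambda>p. FF p y) ` S) \<in> (\<lambda>p. FF p y) ` S"
    using fin ne by (intro Max_in) auto
  then show ?thesis unfolding f_eq by auto
qed
lemma f_mono: "y \<le> y' \<Longrightarrow> rem_mass_adv S y \<le> rem_mass_adv S y'"
  by (metis f_att f_ge FF_mono atoms0 order_trans)
lemma f_nonneg: "0 \<le> y \<Longrightarrow> 0 \<le> rem_mass_adv S y"
  by (metis f_att FF_nonneg atoms0)
lemma f_le1: "rem_mass_adv S y \<le> 1"
  by (metis f_att FF_le atoms0 sum1)
lemma f_zero: "rem_mass_adv S 0 = 0"
  by (metis f_att FF_zero atoms0)
lemma f_one: "rem_mass_adv S 1 = 1"
  by (metis f_att FF_one atoms sum1)
lemma f_less: "rem_mass_adv S y < x \<longleftrightarrow> (\<forall>p\<in>S. FF p y < x)"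
  by (metis f_att f_ge order.strict_trans1)
lemma f_meas: "rem_mass_adv S \<in> borel_measurable borel"
  by (rule borel_measurable_mono) (auto simp: mono_def f_mono)

lemma g_eq: "inv_prof S y = Max ((\<lambda>p. inv_sketch p y) ` S)"
  unfolding inv_prof_def by simp
lemma g_ge: "p \<in> S \<Longrightarrow> inv_sketch p y \<le> inv_prof S y"
  unfolding g_eq using fin by (intro Max_ge) auto
lemma g_att: "\<exists>p\<in>S. inv_prof S y = inv_sketch p y"
proof -
  have "Max ((\<lambda>p. inv_sketch p y) ` S) \<in> (\<lambda>p. inv_sketch p y) ` S"
    using fin ne by (intro Max_in) auto
  then show ?thesis unfolding g_eq by auto
qed
lemma g_mono: "y \<le> y' \<Longrightarrow> inv_prof S y \<le> inv_prof S y'"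
  by (metis g_att g_ge inv_sketch_mono atoms0 order_trans)
lemma g_nonneg: "0 \<le> inv_prof S y"
  by (metis g_att inv_sketch_nonneg atoms0)
lemma g_meas: "inv_prof S \<in> borel_measurable borel"
  by (rule borel_measurable_mono) (auto simp: mono_def g_mono)

lemma f_rc: 
  assumes "rem_mass_adv S y0 < x"
  shows "eventually (\<lambda>y. rem_mass_adv S y < x) (at_right y0)"
proof -
  have "\<forall>p\<in>S. eventually (\<lambda>y. FF p y < x) (at_right y0)"
  proof
    fix p assume p: "p \<in> S"
    have "FF p y0 < x" using assms f_less p by blast
    then show "eventually (\<lambda>y. FF p y < x) (at_right y0)"
      using FF_tendsto[OF atoms0[OF p]] order_tendstoD(2) by blast
  qed
  then have "eventually (\<lambda>y. \<forall>p\<in>S. FF p y < x) (at_right y0)"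
    using fin by (simp add: eventually_ball_finite)
  then show ?thesis by (simp add: f_less)
qed

lemma C_props:
  assumes x: "0 < x" "x \<le> 1"
  shows "0 < C_S S x" "C_S S x \<le> 1" "x \<le> rem_mass_adv S (C_S S x)"
    "\<And>t. 0 \<le> t \<Longrightarrow> t \<le> 1 \<Longrightarrow> x \<le> rem_mass_adv S t \<Longrightarrow> C_S S x \<le> t"
proof -
  define A where "A = {y. y \<in> {0..1} \<and> rem_mass_adv S y \<ge> x}"
  define y0 where "y0 = Inf A"
  have 1: "1 \<in> A" unfolding A_def using x f_one by auto
  have bdd: "bdd_below A" unfolding A_def by (auto intro: bdd_belowI[of _ 0])
  have low: "y0 \<le> y" if "y \<in> A" for y unfolding y0_def using bdd that by (simp add: cInf_lower)
  have y01: "y0 \<le> 1" using low 1 by blast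
  have y00: "0 \<le> y0" unfolding y0_def using 1 by (intro cInf_greatest) (auto simp: A_def)
  have y0A: "y0 \<in> A"
  proof (rule ccontr)
    assume nA: "y0 \<notin> A"
    then have "rem_mass_adv S y0 < x" using y00 y01 unfolding A_def by auto
    from f_rc[OF this] obtain b where b: "b > y0" "\<And>y. y > y0 \<Longrightarrow> y < b \<Longrightarrow> rem_mass_adv S y < x"
      unfolding eventually_at_right_field by blast
    have "Inf A < b" using b(1) y0_def by simp
    then obtain y where y: "y \<in> A" "y < b" using cInf_less_iff[OF _ bdd] 1 by blast
    have "y \<noteq> y0" using y nA by auto
    then have "y > y0" using low[OF y(1)] by simp
    then show False using b(2)[OF _ y(2)] y(1) unfolding A_def by auto
  qed
  have C: "C_S S x = y0"
    unfolding C_S_def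
    by (rule Least_equality) (use y0A low in \<open>auto simp: A_def\<close>)
  show "C_S S x \<le> 1" using C y01 by simp
  show "x \<le> rem_mass_adv S (C_S S x)" using C y0A A_def by simp
  show "0 < C_S S x"
  proof -
    have "y0 \<noteq> 0" using y0A x f_zero unfolding A_def by auto
    then show ?thesis using C y00 by simp
  qed
  show "C_S S x \<le> t" if "0 \<le> t" "t \<le> 1" "x \<le> rem_mass_adv S t" for t
    using C low that unfolding A_def by auto
qed

lemma W_big:
  assumes "1/2 < (t::real)" "\<forall>q\<in>set p. 0 \<le> q \<and> q \<le> 1"
  shows "sum_list (map (\<lambda>q. q / max (2*t) q) p) = sum_list p / (2*t)"
  using assms(2)
proof (induction p)
  case (Cons q p)
  then have "max (2*t) q = 2*t" using assms(1) by auto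
  then show ?case using Cons by (simp add: add_divide_distrib)
qed simp

lemma pw_bound:
  assumes t: "0 < t" "t \<le> 1"
  shows "ennreal (rem_mass_adv S t / t) \<le> ennreal (1/2) * ennreal (inv_prof S t / t)
     + ennreal (min 1 (1/(2*t)))
     + (\<integral>\<^sup>+ s. ennreal (indicator {2*t..1} s * (inv_prof S s / s^2)) \<partial>lborel)"
proof -
  obtain p where p: "p \<in> S" "rem_mass_adv S t = FF p t" using f_att by blast
  have pa: "\<forall>q\<in>set p. 0 \<le> q \<and> q \<le> 1" using atoms p(1) by blast
  define W where "W = sum_list (map (\<lambda>q. q / max (2*t) q) p)"
  have W0: "0 \<le> W" unfolding W_def using pa t by (intro sum_list_nonneg) auto
  have G0: "0 \<le> inv_sketch p t" using inv_sketch_nonneg atoms0 p(1) by blast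
  have "rem_mass_adv S t / t = inv_sketch p t / (2*t) + W"
    using FF_decomp[OF t(1) atoms0[OF p(1)]] p(2) t unfolding W_def by (simp add: field_simps)
  then have e1: "ennreal (rem_mass_adv S t / t) = ennreal (1/2) * ennreal (inv_sketch p t / t) + ennreal W"
  proof -
    have "inv_sketch p t / (2*t) = (1/2) * (inv_sketch p t / t)" by simp
    then have "ennreal (inv_sketch p t / (2*t)) = ennreal (1/2) * ennreal (inv_sketch p t / t)"
      using ennreal_mult[of "1/2" "inv_sketch p t / t"] G0 t by simp
    moreover have "0 \<le> inv_sketch p t / (2*t)" using G0 t by simp
    ultimately show ?thesis using W0 \<open>rem_mass_adv S t / t = inv_sketch p t / (2*t) + W\<close>
      by (simp add: ennreal_plus)
  qed
  have g1: "ennreal (1/2) * ennreal (inv_sketch p t / t) \<le> ennreal (1/2) * ennreal (inv_prof S t / t)"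
    using g_ge[OF p(1), of t] t by (intro mult_left_mono ennreal_leI divide_right_mono) auto
  have W1: "ennreal W \<le> ennreal (min 1 (1/(2*t)))
     + (\<integral>\<^sup>+ s. ennreal (indicator {2*t..1} s * (inv_prof S s / s^2)) \<partial>lborel)"
  proof (cases "t \<le> 1/2")
    case True
    then have mn: "min 1 (1/(2*t)) = 1" using t by (simp add: field_simps)
    have "ennreal W = ennreal 1 + (\<integral>\<^sup>+ s. ennreal (indicator {2*t..1} s * (inv_sketch p s / s^2)) \<partial>lborel)"
      unfolding W_def using list_int[OF t(1) True pa] sum1[OF p(1)] by simp
    also have "\<dots> \<le> ennreal 1 + (\<integral>\<^sup>+ s. ennreal (indicator {2*t..1} s * (inv_prof S s / s^2)) \<partial>lborel)"
      by (intro add_left_mono nn_integral_mono ennreal_leI mult_left_mono divide_right_mono g_ge[OF p(1)])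
        auto
    finally show ?thesis unfolding mn .
  next
    case False
    then have "W = 1/(2*t)" unfolding W_def using W_big[OF _ pa] sum1[OF p(1)] by simp
    moreover have "1/(2*t) \<le> 1" using False by (simp add: field_simps)
    ultimately show ?thesis by (simp add: add_increasing2)
  qed
  show ?thesis unfolding e1 using add_mono[OF g1 W1] by (simp add: add_ac)
qed

lemma stepA:
  "(\<integral>\<^sup>+ x\<in>{0<..1}. ennreal (log 2 (1 / C_S S x)) \<partial>lborel)
    \<le> ennreal (1/ln 2) * (\<integral>\<^sup>+ t. ennreal (indicator {0<..1} t * (rem_mass_adv S t / t)) \<partial>lborel)"
proof -
  define K where "K x t = ennreal (1/ln 2 * (indicator {0<..1} x * indicator {0<..1} t *
     (if x \<le> rem_mass_adv S t then 1/t else 0)))" for x t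
  have [measurable]: "rem_mass_adv S \<in> borel_measurable borel" by (rule f_meas)
  have Kmeas: "(\<lambda>(x,t). K x t) \<in> borel_measurable (lborel \<Otimes>\<^sub>M lborel)"
    unfolding K_def by measurable
  have pw: "ennreal (log 2 (1 / C_S S x)) * indicator {0<..1} x \<le> (\<integral>\<^sup>+ t. K x t \<partial>lborel)" for x
  proof (cases "x \<in> {0<..1}")
    case False then show ?thesis by simp
  next
    case True
    then have x: "0 < x" "x \<le> 1" by auto
    define C where "C = C_S S x"
    have C: "0 < C" "C \<le> 1" "x \<le> rem_mass_adv S C" using C_props[OF x] unfolding C_def by auto
    have "log 2 (1/C) = 1/ln 2 * (- ln C)" using C by (simp add: log_def ln_div)
    then have "ennreal (log 2 (1 / C)) = ennreal (1/ln 2 * (- ln C))" by (simp only:)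
    also have "\<dots> = ennreal (1/ln 2) * ennreal (- ln C)"
      by (rule ennreal_mult) (use C in auto)
    also have "\<dots> = ennreal (1/ln 2) * (\<integral>\<^sup>+ t. ennreal (indicator {C..1} t * (1/t)) \<partial>lborel)"
      using int_inv[OF C(1,2)] by simp
    also have "\<dots> = (\<integral>\<^sup>+ t. ennreal (1/ln 2) * ennreal (indicator {C..1} t * (1/t)) \<partial>lborel)"
      by (rule nn_integral_cmult[symmetric]) (auto intro!: measurable_compose[OF _ measurable_ennreal])
    also have "\<dots> \<le> (\<integral>\<^sup>+ t. K x t \<partial>lborel)"
    proof (rule nn_integral_mono)
      fix t
      show "ennreal (1/ln 2) * ennreal (indicator {C..1} t * (1/t)) \<le> K x t"
      proof (cases "t \<in> {C..1}")
        case True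
        then have "C \<le> t" "t \<le> 1" by auto
        then have "x \<le> rem_mass_adv S t" using C(3) f_mono order_trans by blast
        moreover have "0 < t" using True C by auto
        ultimately show ?thesis using True C x unfolding K_def by (simp add: ennreal_mult[symmetric])
      next
        case False
        then show ?thesis unfolding K_def by simp
      qed
    qed
    finally show ?thesis using True unfolding C_def by simp
  qed
  have "(\<integral>\<^sup>+ x\<in>{0<..1}. ennreal (log 2 (1 / C_S S x)) \<partial>lborel) \<le> (\<integral>\<^sup>+ x. \<integral>\<^sup>+ t. K x t \<partial>lborel \<partial>lborel)"
    by (intro nn_integral_mono pw)
  also have "\<dots> = (\<integral>\<^sup>+ t. \<integral>\<^sup>+ x. K x t \<partial>lborel \<partial>lborel)"
    using lborel_pair.Fubini'[OF Kmeas] by simp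
  also have "\<dots> = (\<integral>\<^sup>+ t. ennreal (1/ln 2) * ennreal (indicator {0<..1} t * (rem_mass_adv S t / t)) \<partial>lborel)"
  proof (rule nn_integral_cong)
    fix t
    show "(\<integral>\<^sup>+ x. K x t \<partial>lborel) = ennreal (1/ln 2) * ennreal (indicator {0<..1} t * (rem_mass_adv S t / t))"
    proof (cases "t \<in> {0<..1}")
      case False then show ?thesis unfolding K_def by simp
    next
      case True
      then have t: "0 < t" "t \<le> 1" by auto
      have f01: "0 \<le> rem_mass_adv S t" "rem_mass_adv S t \<le> 1" using f_nonneg f_le1 t by auto
      have "K x t = ennreal (1/ln 2 * (1/t)) * indicator {0<..rem_mass_adv S t} x" for x
        using f01 t unfolding K_def by (auto simp: indicator_def)
      then have "(\<integral>\<^sup>+ x. K x t \<partial>lborel) = ennreal (1/ln 2 * (1/t)) * emeasure lborel {0<..rem_mass_adv S t}"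
        by (simp add: nn_integral_cmult_indicator)
      also have "\<dots> = ennreal (1/ln 2 * (1/t)) * ennreal (rem_mass_adv S t)"
        using f01 by simp
      also have "\<dots> = ennreal (1/ln 2) * ennreal (indicator {0<..1} t * (rem_mass_adv S t / t))"
        using True t f01 by (simp add: ennreal_mult[symmetric])
      finally show ?thesis .
    qed
  qed
  also have "\<dots> = ennreal (1/ln 2) * (\<integral>\<^sup>+ t. ennreal (indicator {0<..1} t * (rem_mass_adv S t / t)) \<partial>lborel)"
    by (rule nn_integral_cmult) measurable
  finally show ?thesis .
qed

lemma stepB:
  "(\<integral>\<^sup>+ t. ennreal (indicator {0<..1} t * (rem_mass_adv S t / t)) \<partial>lborel)
    \<le> (\<integral>\<^sup>+ t. ennreal (indicator {0<..1} t * (inv_prof S t / t)) \<partial>lborel) + ennreal ((1 + ln 2)/2)"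
proof -
  have [measurable]: "rem_mass_adv S \<in> borel_measurable borel" by (rule f_meas)
  have [measurable]: "inv_prof S \<in> borel_measurable borel" by (rule g_meas)
  define X where "X = (\<integral>\<^sup>+ t. ennreal (indicator {0<..1} t * (inv_prof S t / t)) \<partial>lborel)"
  define A1 where "A1 t = ennreal (1/2) * ennreal (indicator {0<..1} t * (inv_prof S t / t))" for t
  define A2 where "A2 t = ennreal (indicator {0<..1} t * min 1 (1/(2*t)))" for t
  define F where "F t s = ennreal (indicator {0<..1} t * indicator {2*t..1} s * (inv_prof S s / s^2))" for t s
  define A3 where "A3 t = (\<integral>\<^sup>+ s. F t s \<partial>lborel)" for t
  have Fmeas: "(\<lambda>(t,s). F t s) \<in> borel_measurable (lborel \<Otimes>\<^sub>M lborel)"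
  proof -
    have "F t s = ennreal (if 0 < t \<and> t \<le> 1 \<and> 2*t \<le> s \<and> s \<le> 1 then inv_prof S s / (s * s) else 0)" for t s
      unfolding F_def by (simp add: indicator_def power2_eq_square)
    then have e: "(\<lambda>(t,s). F t s) = (\<lambda>(t,s). ennreal (if 0 < t \<and> t \<le> 1 \<and> 2*t \<le> s \<and> s \<le> 1 then inv_prof S s / (s * s) else 0))"
      by auto
    show ?thesis unfolding e by measurable
  qed
  have m1: "A1 \<in> borel_measurable lborel" unfolding A1_def by measurable
  have m2: "A2 \<in> borel_measurable lborel" unfolding A2_def by measurable
  have m3: "A3 \<in> borel_measurable lborel" unfolding A3_def
    using lborel.borel_measurable_nn_integral[OF Fmeas] by simp
  have "(\<integral>\<^sup>+ t. ennreal (indicator {0<..1} t * (rem_mass_adv S t / t)) \<partial>lborel)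
     \<le> (\<integral>\<^sup>+ t. A1 t + A2 t + A3 t \<partial>lborel)"
  proof (rule nn_integral_mono)
    fix t
    show "ennreal (indicator {0<..1} t * (rem_mass_adv S t / t)) \<le> A1 t + A2 t + A3 t"
    proof (cases "t \<in> {0<..1}")
      case False then show ?thesis by simp
    next
      case True
      then have t: "0 < t" "t \<le> 1" by auto
      have "A3 t = (\<integral>\<^sup>+ s. ennreal (indicator {2*t..1} s * (inv_prof S s / s^2)) \<partial>lborel)"
        unfolding A3_def F_def using True by simp
      then show ?thesis using pw_bound[OF t] True unfolding A1_def A2_def by simp
    qed
  qed
  also have "\<dots> = (\<integral>\<^sup>+ t. A1 t \<partial>lborel) + (\<integral>\<^sup>+ t. A2 t \<partial>lborel) + (\<integral>\<^sup>+ t. A3 t \<partial>lborel)"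
    using m1 m2 m3 by (simp add: nn_integral_add)
  also have "(\<integral>\<^sup>+ t. A1 t \<partial>lborel) = ennreal (1/2) * X"
    unfolding A1_def X_def by (rule nn_integral_cmult) measurable
  also have "(\<integral>\<^sup>+ t. A2 t \<partial>lborel) = ennreal ((1 + ln 2)/2)"
  proof -
    have "A2 t = ennreal (indicator {0<..<1/2::real} t) + ennreal (indicator {1/2..1} t * (1/(2*t)))" for t
      unfolding A2_def by (auto simp: indicator_def min_def field_simps)
    then have "(\<integral>\<^sup>+ t. A2 t \<partial>lborel) = (\<integral>\<^sup>+ t. ennreal (indicator {0<..<1/2::real} t) \<partial>lborel)
        + (\<integral>\<^sup>+ t. ennreal (indicator {1/2..1} t * (1/(2*t))) \<partial>lborel)"
      by (simp del: ennreal_indicator add: nn_integral_add)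
    also have "(\<integral>\<^sup>+ t. ennreal (indicator {0<..<1/2::real} t) \<partial>lborel) = ennreal (1/2)"
      by (simp only: ennreal_indicator nn_integral_indicator sets_lborel atLeastLessThan_borel
        greaterThanLessThan_borel emeasure_lborel_Ioo) simp
    also have "(\<integral>\<^sup>+ t. ennreal (indicator {1/2..1} t * (1/(2*t))) \<partial>lborel) = ennreal (ln 2 / 2)"
      by (rule int_half)
    also have "ennreal (1/2) + ennreal (ln 2 / 2) = ennreal ((1 + ln 2)/2)"
      by (simp add: ennreal_plus[symmetric] add_divide_distrib)
    finally show ?thesis .
  qed
  also have "(\<integral>\<^sup>+ t. A3 t \<partial>lborel) = ennreal (1/2) * X"
  proof -
    have "(\<integral>\<^sup>+ t. A3 t \<partial>lborel) = (\<integral>\<^sup>+ s. \<integral>\<^sup>+ t. F t s \<partial>lborel \<partial>lborel)"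
      unfolding A3_def using lborel_pair.Fubini'[OF Fmeas] by simp
    also have "\<dots> = (\<integral>\<^sup>+ s. ennreal (1/2) * ennreal (indicator {0<..1} s * (inv_prof S s / s)) \<partial>lborel)"
    proof (rule nn_integral_cong)
      fix s
      show "(\<integral>\<^sup>+ t. F t s \<partial>lborel) = ennreal (1/2) * ennreal (indicator {0<..1} s * (inv_prof S s / s))"
      proof (cases "s \<in> {0<..1}")
        case False
        then have "F t s = 0" for t unfolding F_def by (auto simp: indicator_def)
        then show ?thesis using False by simp
      next
        case True
        then have s: "0 < s" "s \<le> 1" by auto
        have g0: "0 \<le> inv_prof S s" by (rule g_nonneg)
        have "F t s = ennreal (inv_prof S s / s^2) * indicator {0<..s/2} t" for t
          unfolding F_def using s by (auto simp: indicator_def)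
        then have "(\<integral>\<^sup>+ t. F t s \<partial>lborel) = ennreal (inv_prof S s / s^2) * emeasure lborel {0<..s/2}"
          by (simp add: nn_integral_cmult_indicator)
        also have "\<dots> = ennreal (inv_prof S s / s^2) * ennreal (s/2)" using s by simp
        also have "\<dots> = ennreal (inv_prof S s / s^2 * (s/2))"
          by (rule ennreal_mult[symmetric]) (use s g0 in auto)
        also have "inv_prof S s / s^2 * (s/2) = 1/2 * (inv_prof S s / s)"
          using s by (simp add: field_simps power2_eq_square)
        also have "ennreal (1/2 * (inv_prof S s / s)) = ennreal (1/2) * ennreal (indicator {0<..1} s * (inv_prof S s / s))"
          using True ennreal_mult[of "1/2" "inv_prof S s / s"] s g0 by simp
        finally show ?thesis .
      qed
    qed
    also have "\<dots> = ennreal (1/2) * X"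
      unfolding X_def by (rule nn_integral_cmult) measurable
    finally show ?thesis .
  qed
  also have "ennreal (1/2) * X + ennreal ((1 + ln 2)/2) + ennreal (1/2) * X = X + ennreal ((1 + ln 2)/2)"
  proof -
    have "ennreal (1/2) * X + ennreal (1/2) * X = (ennreal (1/2) + ennreal (1/2)) * X"
      by (simp add: distrib_right)
    also have "ennreal (1/2) + ennreal (1/2) = 1"
      using ennreal_plus[of "1/2" "1/2", symmetric] by simp
    finally show ?thesis by (simp add: add_ac)
  qed
  finally show ?thesis unfolding X_def .
qed

end

theorem lemma7:
  fixes S :: "real list set"
  assumes "finite S" and "S \<noteq> {}" and "\<forall>p\<in>S. is_distribution p"
  shows "(\<integral>\<^sup>+ x\<in>{0<..1}. ennreal (log 2 (1 / C_S S x)) \<partial>lborel)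
    \<le> (\<integral>\<^sup>+ y\<in>{0<..1}. ennreal (inv_prof S y / (y * ln 2)) \<partial>lborel)
       + ennreal ((1 + log 2 (exp 1)) / 2)"
proof -
  have [measurable]: "inv_prof S \<in> borel_measurable borel" by (rule g_meas[OF assms])
  define X where "X = (\<integral>\<^sup>+ t. ennreal (indicator {0<..1} t * (inv_prof S t / t)) \<partial>lborel)"
  have "(\<integral>\<^sup>+ x\<in>{0<..1}. ennreal (log 2 (1 / C_S S x)) \<partial>lborel)
      \<le> ennreal (1/ln 2) * (\<integral>\<^sup>+ t. ennreal (indicator {0<..1} t * (rem_mass_adv S t / t)) \<partial>lborel)"
    by (rule stepA[OF assms])
  also have "\<dots> \<le> ennreal (1/ln 2) * (X + ennreal ((1 + ln 2)/2))"
    unfolding X_def by (intro mult_left_mono stepB[OF assms]) auto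
  also have "\<dots> = ennreal (1/ln 2) * X + ennreal (1/ln 2) * ennreal ((1 + ln 2)/2)"
    by (simp add: distrib_left)
  also have "ennreal (1/ln 2) * X = (\<integral>\<^sup>+ y\<in>{0<..1}. ennreal (inv_prof S y / (y * ln 2)) \<partial>lborel)"
  proof -
    have "ennreal (1/ln 2) * X = (\<integral>\<^sup>+ t. ennreal (1/ln 2) * ennreal (indicator {0<..1} t * (inv_prof S t / t)) \<partial>lborel)"
      unfolding X_def by (rule nn_integral_cmult[symmetric]) measurable
    also have "\<dots> = (\<integral>\<^sup>+ y\<in>{0<..1}. ennreal (inv_prof S y / (y * ln 2)) \<partial>lborel)"
    proof (rule nn_integral_cong)
      fix y
      show "ennreal (1/ln 2) * ennreal (indicator {0<..1} y * (inv_prof S y / y)) =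
          ennreal (inv_prof S y / (y * ln 2)) * indicator {0<..1} y"
      proof (cases "y \<in> {0<..1}")
        case True
        have "0 \<le> inv_prof S y / y" using True g_nonneg[OF assms] by auto
        then have "ennreal (1/ln 2) * ennreal (inv_prof S y / y) = ennreal (1/ln 2 * (inv_prof S y / y))"
          by (intro ennreal_mult[symmetric]) auto
        then show ?thesis using True by (simp add: mult.commute)
      qed simp
    qed
    finally show ?thesis .
  qed
  also have "ennreal (1/ln 2) * ennreal ((1 + ln 2)/2) = ennreal ((1 + log 2 (exp 1)) / 2)"
  proof -
    have "ennreal (1/ln 2) * ennreal ((1 + ln 2)/2) = ennreal (1/ln 2 * ((1 + ln 2)/2))"
      by (rule ennreal_mult[symmetric]) auto
    also have "1/ln 2 * ((1 + ln 2)/2) = (1 + log 2 (exp 1)) / 2"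
      by (simp add: log_def field_simps)
    finally show ?thesis .
  qed
  finally show ?thesis .
qed

end
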